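(* If $X$ is a crowded submaximal (Tychonoff) space, then $B_1(X)$ is a Baire space.
   Context: A space is crowded if it is non-empty and has no isolated points; it is submaximal if every dense subset is open. $B_1(X)$ is the set of all Baire-one real-valued functions on $X$ (pointwise limits of sequences of continuous real-valued functions on $X$) with the topology of pointwise convergence. A space is Baire if every countable intersection of open dense subsets is dense. All spaces are assumed Tychonoff. *)

theory Defs
  imports "HOL-Analysis.Analysis"
begin

definition tychonoff_space :: "'a topology \<Rightarrow> bool" where
  "tychonoff_space X \<longleftrightarrow> completely_regular_space X \<and> t1_space X"

definition crowded_space :: "'a topology \<Rightarrow> bool" where
  "crowded_space X \<longleftrightarrow> topspace X \<noteq> {} \<and> (\<forall>x \<in> topspace X. \<not> openin X {x})"

definition submaximal_space :: "'a topology \<Rightarrow> bool" where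
  "submaximal_space X \<longleftrightarrow>
     (\<forall>D. D \<subseteq> topspace X \<and> X closure_of D = topspace X \<longrightarrow> openin X D)"

definition baire_space :: "'a topology \<Rightarrow> bool" where
  "baire_space X \<longleftrightarrow>
     (\<forall>U :: nat \<Rightarrow> 'a set.
        (\<forall>n. openin X (U n) \<and> X closure_of (U n) = topspace X)
        \<longrightarrow> X closure_of (topspace X \<inter> (\<Inter>n. U n)) = topspace X)"

text \<open>Baire-one real functions on X, represented as extensional functions on
  topspace X (the points of the product space), that are pointwise limits of
  sequences of continuous real-valued functions on X.\<close>
definition baire_one :: "'a topology \<Rightarrow> ('a \<Rightarrow> real) set" where
  "baire_one X = {f. f \<in> extensional (topspace X) \<and>
     (\<exists>g :: nat \<Rightarrow> 'a \<Rightarrow> real. (\<forall>n. continuous_map X euclideanreal (g n)) \<and>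
        (\<forall>x \<in> topspace X. (\<lambda>n. g n x) \<longlonglongrightarrow> f x))}"

definition B1 :: "'a topology \<Rightarrow> ('a \<Rightarrow> real) topology" where
  "B1 X = subtopology (powertop_real (topspace X)) (baire_one X)"

end

theory Submission
  imports Defs
begin

definition B1f :: "'a topology \<Rightarrow> ('a \<Rightarrow> real) \<Rightarrow> bool" where
  "B1f X h \<longleftrightarrow> (\<exists>g :: nat \<Rightarrow> 'a \<Rightarrow> real. (\<forall>n. continuous_map X euclideanreal (g n)) \<and>
        (\<forall>x \<in> topspace X. (\<lambda>n. g n x) \<longlonglongrightarrow> h x))"

lemma bump:
  assumes "completely_regular_space X" "closedin X C" "x \<in> topspace X - C"
  shows "\<exists>e. continuous_map X euclideanreal e \<and> e x = 1 \<and> (\<forall>y\<in>C. e y = 0)"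
proof -
  obtain f :: "'a \<Rightarrow> real" where f: "continuous_map X (top_of_set {0..1}) f" "f x = 0" "f ` C \<subseteq> {1}"
    using assms unfolding completely_regular_space_def by blast
  have "continuous_map X euclideanreal f"
    using f(1) continuous_map_in_subtopology by blast
  then have "continuous_map X euclideanreal (\<lambda>y. 1 - f y)"
    by (intro continuous_intros)
  then show ?thesis using f by (intro exI[of _ "\<lambda>y. 1 - f y"]) auto
qed

lemma B1f_add:
  assumes "B1f X f" "B1f X g" shows "B1f X (\<lambda>x. f x + g x)"
proof -
  obtain a where a: "\<forall>n. continuous_map X euclideanreal (a n)" "\<forall>x \<in> topspace X. (\<lambda>n. a n x) \<longlonglongrightarrow> f x"
    using assms(1) unfolding B1f_def by blast
  obtain b where b: "\<forall>n. continuous_map X euclideanreal (b n)" "\<forall>x \<in> topspace X. (\<lambda>n. b n x) \<longlonglongrightarrow> g x"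
    using assms(2) unfolding B1f_def by blast
  show ?thesis unfolding B1f_def
    apply (rule exI[of _ "\<lambda>n x. a n x + b n x"])
    using a b by (auto intro: continuous_intros tendsto_add)
qed

lemma B1f_zero: "B1f X (\<lambda>x. 0)"
  unfolding B1f_def by (rule exI[of _ "\<lambda>n x. 0"]) auto

lemma V_part:
  assumes cr: "completely_regular_space X" and t1: "t1_space X"
    and V: "openin X V" "countable V"
  shows "\<exists>h. B1f X h \<and> (\<forall>x\<in>V. h x = a x) \<and> (\<forall>x\<in>topspace X - V. h x = 0)"
proof (cases "V = {}")
  case True then show ?thesis using B1f_zero by fastforce
next
  case False
  define v where "v = from_nat_into V"
  have rv: "range v = V" using False V(2) unfolding v_def by (simp add: range_from_nat_into)
  have VT: "V \<subseteq> topspace X" using V(1) openin_subset by blast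
  have ex: "\<exists>e. continuous_map X euclideanreal e \<and> e (v k) = 1 \<and>
      (\<forall>y\<in>(topspace X - V) \<union> {v j |j. j < n \<and> v j \<noteq> v k}. e y = 0)" for k n
  proof (rule bump[OF cr])
    have fin: "finite {v j |j. j < n \<and> v j \<noteq> v k}"
      by (rule finite_subset[of _ "v ` {..<n}"]) auto
    have "closedin X {v j |j. j < n \<and> v j \<noteq> v k}"
    proof -
      have "{v j |j. j < n \<and> v j \<noteq> v k} \<subseteq> topspace X" using rv VT by auto
      then show ?thesis using t1 fin unfolding t1_space_closedin_finite by blast
    qed
    then show "closedin X ((topspace X - V) \<union> {v j |j. j < n \<and> v j \<noteq> v k})"
      using V(1) by (intro closedin_Un) auto
    show "v k \<in> topspace X - ((topspace X - V) \<union> {v j |j. j < n \<and> v j \<noteq> v k})"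
      using rv VT by auto
  qed
  define e where "e k n = (SOME e. continuous_map X euclideanreal e \<and> e (v k) = 1 \<and>
      (\<forall>y\<in>(topspace X - V) \<union> {v j |j. j < n \<and> v j \<noteq> v k}. e y = 0))" for k n
  have eP: "continuous_map X euclideanreal (e k n) \<and> e k n (v k) = 1 \<and>
      (\<forall>y\<in>(topspace X - V) \<union> {v j |j. j < n \<and> v j \<noteq> v k}. e k n y = 0)" for k n
    unfolding e_def by (rule someI_ex[OF ex])
  have e: "\<And>k n. continuous_map X euclideanreal (e k n)"
    "\<And>k n. e k n (v k) = 1" "\<And>k n y. y \<in> topspace X - V \<Longrightarrow> e k n y = 0"
    "\<And>k n j. j < n \<Longrightarrow> v j \<noteq> v k \<Longrightarrow> e k n (v j) = 0"
    using eP by blast+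
  define a' where "a' k = (if (\<forall>j<k. v j \<noteq> v k) then a (v k) else 0)" for k
  define g where "g n x = (\<Sum>k<n. a' k * e k n x)" for n x
  define h where "h x = (if x \<in> V then a x else 0)" for x
  have "\<forall>n. continuous_map X euclideanreal (g n)"
    unfolding g_def using e(1) by (auto intro!: continuous_intros)
  moreover have "(\<lambda>n. g n x) \<longlonglongrightarrow> h x" if x: "x \<in> topspace X" for x
  proof (cases "x \<in> V")
    case False
    then have "g n x = 0" for n unfolding g_def using e(3) x by auto
    then show ?thesis using False unfolding h_def by simp
  next
    case True
    then obtain m where m: "v m = x" using rv by auto
    define m0 where "m0 = (LEAST k. v k = x)"
    have m0: "v m0 = x" "m0 \<le> m" using m unfolding m0_def by (auto intro: LeastI Least_le)
    have lt: "\<And>j. j < m0 \<Longrightarrow> v j \<noteq> x" unfolding m0_def using not_less_Least by blast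
    have "g n x = a x" if n: "n > m" for n
    proof -
      have "a' k * e k n x = (if k = m0 then a x else 0)" if "k < n" for k
      proof (cases "v k = x")
        case True
        have "k = m0 \<longleftrightarrow> (\<forall>j<k. v j \<noteq> v k)"
        proof
          assume "k = m0" then show "\<forall>j<k. v j \<noteq> v k" using lt True by auto
        next
          assume "\<forall>j<k. v j \<noteq> v k"
          then have "\<not> m0 < k" using m0 True by auto
          moreover have "\<not> k < m0" using lt True by auto
          ultimately show "k = m0" by auto
        qed
        then show ?thesis using True e(2)[of k n] unfolding a'_def by auto
      next
        case False
        then have "e k n x = 0" using e(4)[of m n k] m n by auto
        then show ?thesis using False m0 by auto
      qed
      then have "g n x = (\<Sum>k<n. if k = m0 then a x else 0)"
        unfolding g_def by (intro sum.cong) auto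
      also have "\<dots> = a x" using m0 n by simp
      finally show ?thesis .
    qed
    then have "eventually (\<lambda>n. g n x = h x) sequentially"
      unfolding eventually_sequentially h_def using True by (intro exI[of _ "Suc m"]) auto
    then show ?thesis by (rule tendsto_eventually)
  qed
  ultimately have "B1f X h" unfolding B1f_def by blast
  moreover have "\<forall>x\<in>V. h x = a x" "\<forall>x\<in>topspace X - V. h x = 0" by (auto simp: h_def)
  ultimately show ?thesis by blast
qed


lemma N_part:
  assumes cr: "completely_regular_space X"
    and N: "N \<subseteq> topspace X" "countable N" "\<And>s. s \<in> N \<Longrightarrow> closedin X (N - {s})"
  shows "\<exists>h. B1f X h \<and> (\<forall>x\<in>N. h x = a x)"
proof (cases "N = {}")
  case True then show ?thesis using B1f_zero by fastforce
next
  case False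
  define s where "s = from_nat_into N"
  have rs: "range s = N" using False N(2) unfolding s_def by (simp add: range_from_nat_into)
  have ex: "\<exists>e. continuous_map X euclideanreal e \<and> e (s k) = 1 \<and> (\<forall>y\<in>N - {s k}. e y = 0)" for k
    using rs N by (intro bump[OF cr]) auto
  define \<phi> where "\<phi> k = (SOME e. continuous_map X euclideanreal e \<and> e (s k) = 1 \<and> (\<forall>y\<in>N - {s k}. e y = 0))" for k
  have \<phi>P: "continuous_map X euclideanreal (\<phi> k) \<and> \<phi> k (s k) = 1 \<and> (\<forall>y\<in>N - {s k}. \<phi> k y = 0)" for k
    unfolding \<phi>_def by (rule someI_ex[OF ex])
  define c where "c k n x = min 1 (real n * max 0 (\<phi> k x - 1/2))" for k n x
  define g where "g n x = (\<Sum>k<n. a (s k) * c k n x * (\<Prod>j<k. 1 - c j n x))" for n x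
  define h where "h x = (if \<exists>k. \<phi> k x > 1/2 then a (s (LEAST k. \<phi> k x > 1/2)) else 0)" for x
  have c0: "\<phi> k x \<le> 1/2 \<Longrightarrow> c k n x = 0" for k n x unfolding c_def by simp
  have c1: "\<phi> k x > 1/2 \<Longrightarrow> real n * (\<phi> k x - 1/2) \<ge> 1 \<Longrightarrow> c k n x = 1" for k n x
    unfolding c_def by simp
  have "continuous_map X euclideanreal (c k n)" for k n
    unfolding c_def using \<phi>P by (auto intro!: continuous_intros)
  then have "\<forall>n. continuous_map X euclideanreal (g n)"
    unfolding g_def by (auto intro!: continuous_intros)
  moreover have "(\<lambda>n. g n x) \<longlonglongrightarrow> h x" for x
  proof (cases "\<exists>k. \<phi> k x > 1/2")
    case False
    then have "g n x = 0" for n unfolding g_def using c0 by (simp add: not_less)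
    then show ?thesis using False unfolding h_def by simp
  next
    case True
    define m where "m = (LEAST k. \<phi> k x > 1/2)"
    have m: "\<phi> m x > 1/2" unfolding m_def using True by (metis LeastI)
    have lt: "\<And>k. k < m \<Longrightarrow> \<phi> k x \<le> 1/2" unfolding m_def using not_less_Least not_less by blast
    obtain N0 where N0: "1 < real N0 * (\<phi> m x - 1/2)"
      using reals_Archimedean3[of "\<phi> m x - 1/2"] m by auto
    have "g n x = a (s m)" if n: "n \<ge> max N0 (Suc m)" for n
    proof -
      have le: "real N0 * (\<phi> m x - 1/2) \<le> real n * (\<phi> m x - 1/2)"
        using n m by (intro mult_right_mono) auto
      have cm: "c m n x = 1" by (rule c1[OF m]) (use le N0 in linarith)
      have "a (s k) * c k n x * (\<Prod>j<k. 1 - c j n x) = (if k = m then a (s m) else 0)" if "k < n" for k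
      proof (cases k m rule: linorder_cases)
        case less then show ?thesis using c0 lt by simp
      next
        case equal then show ?thesis using cm c0 lt by simp
      next
        case greater
        then have "(\<Prod>j<k. 1 - c j n x) = 0" using cm
          by (subst prod_zero_iff) auto
        then show ?thesis using greater by simp
      qed
      then have "g n x = (\<Sum>k<n. if k = m then a (s m) else 0)"
        unfolding g_def by (intro sum.cong) auto
      also have "\<dots> = a (s m)" using n by simp
      finally show ?thesis .
    qed
    then have "eventually (\<lambda>n. g n x = h x) sequentially"
      unfolding eventually_sequentially h_def m_def[symmetric] using True
      by (intro exI[of _ "max N0 (Suc m)"]) auto
    then show ?thesis by (rule tendsto_eventually)
  qed
  ultimately have "B1f X h" unfolding B1f_def by blast
  moreover have "h x = a x" if "x \<in> N" for x
  proof -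
    obtain i where i: "x = s i" using rs \<open>x \<in> N\<close> by auto
    have \<phi>v: "\<phi> k x = (if s k = x then 1 else 0)" for k
      using \<phi>P[of k] \<open>x \<in> N\<close> by auto
    have ex1: "\<exists>k. \<phi> k x > 1/2" using \<phi>v i by (intro exI[of _ i]) auto
    have "\<phi> (LEAST k. \<phi> k x > 1/2) x > 1/2" using ex1 by (metis LeastI)
    then have "s (LEAST k. \<phi> k x > 1/2) = x" using \<phi>v by (auto split: if_splits)
    then show ?thesis unfolding h_def using ex1 by simp
  qed
  ultimately show ?thesis by blast
qed


lemma extend:
  assumes ty: "tychonoff_space X" and sm: "submaximal_space X"
    and S: "S \<subseteq> topspace X" "countable S"
  shows "\<exists>f \<in> baire_one X. \<forall>x\<in>S. f x = L x"
proof -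
  have cr: "completely_regular_space X" and t1: "t1_space X"
    using ty unfolding tychonoff_space_def by auto
  define V where "V = X interior_of S"
  define N where "N = S - V"
  have VS: "V \<subseteq> S" unfolding V_def by (rule interior_of_subset)
  have Vo: "openin X V" unfolding V_def by simp
  have Vc: "countable V" using VS S(2) countable_subset by blast
  have clA: "closedin X A" if "A \<subseteq> N" for A
  proof -
    have "X interior_of A \<subseteq> V" unfolding V_def using that N_def by (intro interior_of_mono) auto
    moreover have "X interior_of A \<subseteq> A" by (rule interior_of_subset)
    ultimately have "X interior_of A = {}" using that N_def by auto
    then have "X closure_of (topspace X - A) = topspace X" by (simp add: closure_of_complement)
    then have "openin X (topspace X - A)" using sm unfolding submaximal_space_def by blast
    moreover have "A \<subseteq> topspace X" using that S N_def by auto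
    ultimately show ?thesis by (simp add: closedin_def)
  qed
  have NT: "N \<subseteq> topspace X" using S N_def by auto
  have Nc: "countable N" using S(2) N_def by auto
  obtain f2 where f2: "B1f X f2" "\<forall>x\<in>N. f2 x = L x"
    using N_part[OF cr NT Nc, of L] clA by blast
  obtain f1 where f1: "B1f X f1" "\<forall>x\<in>V. f1 x = L x - f2 x" "\<forall>x\<in>topspace X - V. f1 x = 0"
    using V_part[OF cr t1 Vo Vc, of "\<lambda>x. L x - f2 x"] by blast
  have B: "B1f X (\<lambda>x. f1 x + f2 x)" using B1f_add[OF f1(1) f2(1)] .
  then obtain g where g: "\<forall>n. continuous_map X euclideanreal (g n)"
      "\<forall>x \<in> topspace X. (\<lambda>n. g n x) \<longlonglongrightarrow> f1 x + f2 x"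
    unfolding B1f_def by blast
  define f where "f = restrict (\<lambda>x. f1 x + f2 x) (topspace X)"
  have "f \<in> baire_one X" unfolding baire_one_def f_def using g by auto
  moreover have "\<forall>x\<in>S. f x = L x"
  proof
    fix x assume x: "x \<in> S"
    show "f x = L x"
    proof (cases "x \<in> V")
      case True then show ?thesis using f1 x S unfolding f_def by auto
    next
      case False then show ?thesis using f1 f2 x S unfolding f_def N_def by auto
    qed
  qed
  ultimately show ?thesis by blast
qed


definition Bset :: "'a topology \<Rightarrow> ('a \<Rightarrow> real) \<Rightarrow> 'a set \<Rightarrow> real \<Rightarrow> ('a \<Rightarrow> real) set" where
  "Bset X f F r = {h \<in> baire_one X. \<forall>x\<in>F. \<bar>h x - f x\<bar> < r}"

lemma baire_one_sub: "baire_one X \<subseteq> topspace (powertop_real (topspace X))"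
  unfolding baire_one_def by (auto simp: PiE_def)

lemma topspace_B1: "topspace (B1 X) = baire_one X"
  unfolding B1_def using baire_one_sub by auto

lemma Bset_open:
  assumes "finite F" "F \<subseteq> topspace X"
  shows "openin (B1 X) (Bset X f F r)"
proof -
  let ?P = "powertop_real (topspace X)"
  define W where "W x = {h \<in> topspace ?P. h x \<in> ball (f x) r}" for x
  have "openin ?P (W x)" if "x \<in> F" for x
    unfolding W_def
    by (rule openin_continuous_map_preimage[OF continuous_map_product_projection])
       (use that assms in auto)
  then have op: "openin ?P ((\<Inter>x\<in>F. W x) \<inter> topspace ?P)"
    using assms(1) by blast
  have "Bset X f F r = ((\<Inter>x\<in>F. W x) \<inter> topspace ?P) \<inter> baire_one X"
    unfolding Bset_def W_def using baire_one_sub by (auto simp: dist_real_def abs_minus_commute)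
  then show ?thesis unfolding B1_def openin_subtopology using op by blast
qed

lemma Bset_nbhd:
  assumes "openin (B1 X) Q" "f \<in> Q"
  shows "\<exists>F r. finite F \<and> F \<subseteq> topspace X \<and> r > 0 \<and> Bset X f F r \<subseteq> Q"
proof -
  let ?P = "powertop_real (topspace X)"
  obtain Q' where Q': "openin ?P Q'" "Q = Q' \<inter> baire_one X"
    using assms(1) unfolding B1_def openin_subtopology by blast
  then obtain U where U: "finite {i \<in> topspace X. U i \<noteq> topspace euclideanreal}"
     "\<forall>i \<in> topspace X. openin euclideanreal (U i)" "f \<in> Pi\<^sub>E (topspace X) U" "Pi\<^sub>E (topspace X) U \<subseteq> Q'"
    using assms(2) unfolding openin_product_topology_alt by blast
  define F where "F = {i \<in> topspace X. U i \<noteq> UNIV}"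
  have ex: "\<exists>e>0. ball (f i) e \<subseteq> U i" if "i \<in> F" for i
    using U(2,3) that unfolding F_def by (auto simp: open_contains_ball PiE_iff)
  define \<epsilon> where "\<epsilon> i = (SOME e. e > 0 \<and> ball (f i) e \<subseteq> U i)" for i
  have \<epsilon>: "\<epsilon> i > 0 \<and> ball (f i) (\<epsilon> i) \<subseteq> U i" if "i \<in> F" for i
    unfolding \<epsilon>_def using someI_ex[OF ex[OF that]] .
  have finF: "finite F" using U(1) unfolding F_def by simp
  define r where "r = Min (insert 1 (\<epsilon> ` F))"
  have r0: "r > 0" unfolding r_def using finF \<epsilon> by auto
  have rle: "r \<le> \<epsilon> i" if "i \<in> F" for i unfolding r_def using finF that by auto
  have "Bset X f F r \<subseteq> Q"
  proof
    fix h assume h: "h \<in> Bset X f F r"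
    then have hY: "h \<in> baire_one X" and hF: "\<forall>x\<in>F. \<bar>h x - f x\<bar> < r" unfolding Bset_def by auto
    have "h \<in> Pi\<^sub>E (topspace X) U"
    proof -
      have "h i \<in> U i" if "i \<in> topspace X" for i
      proof (cases "i \<in> F")
        case True
        then have "h i \<in> ball (f i) (\<epsilon> i)" using hF rle[OF True]
          by (auto simp: dist_real_def abs_minus_commute)
        then show ?thesis using \<epsilon>[OF True] by auto
      next
        case False then show ?thesis using that unfolding F_def by auto
      qed
      moreover have "h \<in> extensional (topspace X)" using hY unfolding baire_one_def by auto
      ultimately show ?thesis by (auto simp: PiE_iff)
    qed
    then show "h \<in> Q" using U(4) Q'(2) hY by auto
  qed
  then show ?thesis using finF r0 F_def by blast
qed


lemma Bset_mono: "r \<le> r' \<Longrightarrow> F' \<subseteq> F \<Longrightarrow> Bset X f F r \<subseteq> Bset X f F' r'"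
  unfolding Bset_def by fastforce

theorem mainTheorem5:
  fixes X :: "'a topology"
  assumes "tychonoff_space X" and "crowded_space X" and "submaximal_space X"
  shows "baire_space (B1 X)"
  unfolding baire_space_def
proof (intro allI impI)
  fix U :: "nat \<Rightarrow> ('a \<Rightarrow> real) set"
  assume HU: "\<forall>n. openin (B1 X) (U n) \<and> B1 X closure_of U n = topspace (B1 X)"
  let ?Y = "baire_one X"
  let ?T = "topspace X"
  define Inv where "Inv st \<longleftrightarrow> fst st \<in> ?Y \<and> finite (fst (snd st)) \<and> fst (snd st) \<subseteq> ?T \<and> snd (snd st) > 0"
    for st :: "('a \<Rightarrow> real) \<times> 'a set \<times> real"
  define Q where "Q n st st' \<longleftrightarrow> Inv st' \<and> fst (snd st) \<subseteq> fst (snd st') \<and> snd (snd st') \<le> snd (snd st) / 2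
     \<and> snd (snd st') \<le> 1 / real (Suc n)
     \<and> Bset X (fst st') (fst (snd st')) (2 * snd (snd st')) \<subseteq> U n \<inter> Bset X (fst st) (fst (snd st)) (snd (snd st))"
    for n st st'
  have step: "\<exists>st'. Q n st st'" if "Inv st" for n st
  proof -
    obtain f F r where st: "st = (f, F, r)" by (cases st) auto
    have f: "f \<in> ?Y" "finite F" "F \<subseteq> ?T" "r > 0" using that st unfolding Inv_def by auto
    have Bo: "openin (B1 X) (Bset X f F r)" using Bset_open f by blast
    have "f \<in> Bset X f F r" using f unfolding Bset_def by auto
    have dn: "B1 X closure_of U n = topspace (B1 X)" and on: "openin (B1 X) (U n)" using HU by auto
    have "U n \<inter> Bset X f F r \<noteq> {}"
      using dn Bo \<open>f \<in> Bset X f F r\<close> unfolding dense_intersects_open by blast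
    then obtain f' where f': "f' \<in> U n \<inter> Bset X f F r" by blast
    have oi: "openin (B1 X) (U n \<inter> Bset X f F r)" using on Bo by (rule openin_Int)
    then obtain G \<rho> where G: "finite G" "G \<subseteq> ?T" "\<rho> > 0" "Bset X f' G \<rho> \<subseteq> U n \<inter> Bset X f F r"
      using Bset_nbhd[OF oi f'] by metis
    define r' where "r' = min (min (\<rho>/2) (r/2)) (1 / real (Suc n))"
    have f'Y: "f' \<in> ?Y" using f' unfolding Bset_def by auto
    have "Bset X f' (F \<union> G) (2 * r') \<subseteq> Bset X f' G \<rho>"
      by (rule Bset_mono) (auto simp: r'_def)
    moreover have "r' > 0" "r' \<le> r / 2" "r' \<le> 1 / real (Suc n)" using G f by (auto simp: r'_def)
    ultimately have "Q n st (f', F \<union> G, r')"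
      unfolding Q_def Inv_def st fst_conv snd_conv using G f f'Y by blast
    then show ?thesis by blast
  qed
  show "B1 X closure_of (topspace (B1 X) \<inter> (\<Inter>n. U n)) = topspace (B1 X)"
    unfolding dense_intersects_open
  proof (intro allI impI)
    fix W assume W: "openin (B1 X) W \<and> W \<noteq> {}"
    then obtain f0 where f0: "f0 \<in> W" by blast
    obtain F0 r0 where F0: "finite F0" "F0 \<subseteq> ?T" "r0 > 0" "Bset X f0 F0 r0 \<subseteq> W"
      using Bset_nbhd[OF conjunct1[OF W] f0] by metis
    have f0Y: "f0 \<in> ?Y" using W f0 openin_subset topspace_B1 by blast
    define nxt where "nxt n st = (SOME st'. Q n st st')" for n st
    define st where "st n = rec_nat (f0, F0, r0/2) nxt n" for n
    have st0: "st 0 = (f0, F0, r0/2)" unfolding st_def by simp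
    have stS: "st (Suc n) = nxt n (st n)" for n unfolding st_def by simp
    have I: "Inv (st n)" for n
    proof (induction n)
      case 0 then show ?case using F0 f0Y unfolding st0 Inv_def by auto
    next
      case (Suc n)
      then have "Q n (st n) (st (Suc n))" unfolding stS nxt_def using step by (metis someI_ex)
      then show ?case unfolding Q_def by blast
    qed
    have Qn: "Q n (st n) (st (Suc n))" for n
      unfolding stS nxt_def using step[OF I[of n]] by (metis someI_ex)
    define fs where "fs n = fst (st n)" for n
    define Fs where "Fs n = fst (snd (st n))" for n
    define rs where "rs n = snd (snd (st n))" for n
    have fsY: "fs n \<in> ?Y" and Fsfin: "finite (Fs n)" and FsT: "Fs n \<subseteq> ?T" and rs0: "rs n > 0" for n
      using I[of n] unfolding Inv_def fs_def Fs_def rs_def by auto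
    have Fs_mono: "Fs n \<subseteq> Fs (Suc n)" and rs_half: "rs (Suc n) \<le> rs n / 2"
      and rs_small: "rs (Suc n) \<le> 1 / real (Suc n)"
      and Bsub: "Bset X (fs (Suc n)) (Fs (Suc n)) (2 * rs (Suc n)) \<subseteq> U n \<inter> Bset X (fs n) (Fs n) (rs n)" for n
      using Qn[of n] unfolding Q_def fs_def Fs_def rs_def by auto
    have Fs_le: "m \<le> n \<Longrightarrow> Fs m \<subseteq> Fs n" for m n
      using lift_Suc_mono_le[of Fs, OF Fs_mono] by blast
    have Bchain: "Bset X (fs k) (Fs k) (2 * rs k) \<subseteq> Bset X (fs n) (Fs n) (2 * rs n)" if "n \<le> k" for n k
      using that
    proof (induction k rule: dec_induct)
      case base then show ?case by simp
    next
      case (step k)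
      have "Bset X (fs (Suc k)) (Fs (Suc k)) (2 * rs (Suc k)) \<subseteq> Bset X (fs k) (Fs k) (rs k)"
        using Bsub by blast
      also have "\<dots> \<subseteq> Bset X (fs k) (Fs k) (2 * rs k)" using rs0[of k] by (intro Bset_mono) auto
      finally show ?case using step.IH by blast
    qed
    have fs_in: "fs k \<in> Bset X (fs k) (Fs k) (2 * rs k)" for k
      using fsY rs0[of k] unfolding Bset_def by auto
    have close: "\<bar>fs k x - fs n x\<bar> < rs n" if "n \<le> k" "x \<in> Fs n" for n k x
    proof (cases "n = k")
      case True then show ?thesis using rs0[of n] by simp
    next
      case False
      then have "Suc n \<le> k" using that by auto
      then have "fs k \<in> Bset X (fs (Suc n)) (Fs (Suc n)) (2 * rs (Suc n))"
        using Bchain fs_in by blast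
      then have "fs k \<in> Bset X (fs n) (Fs n) (rs n)" using Bsub by blast
      then show ?thesis using that unfolding Bset_def by auto
    qed
    define S where "S = (\<Union>n. Fs n)"
    have ST: "S \<subseteq> ?T" using FsT unfolding S_def by auto
    have Sc: "countable S" unfolding S_def using Fsfin by (auto intro: countable_finite)
    define L where "L x = lim (\<lambda>k. fs k x)" for x
    have conv: "(\<lambda>k. fs k x) \<longlonglongrightarrow> L x" if xS0: "x \<in> S" for x
    proof -
      obtain n0 where n0: "x \<in> Fs n0" using xS0 unfolding S_def by auto
      have "Cauchy (\<lambda>k. fs k x)"
      proof (rule CauchyI)
        fix e :: real assume e: "e > 0"
        obtain j where j: "inverse (real (Suc j)) < e / 2" using reals_Archimedean[of "e/2"] e by auto
        define M where "M = max n0 (Suc j)"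
        have xM: "x \<in> Fs M" using Fs_le[of n0 M] n0 unfolding M_def by auto
        have "rs M \<le> 1 / real (Suc j)"
        proof -
          obtain p where p: "M = Suc p" "p \<ge> j" unfolding M_def
            by (metis Suc_le_D max.cobounded2 Suc_le_mono)
          have "rs M \<le> 1 / real (Suc p)" using rs_small[of p] p by simp
          also have "\<dots> \<le> 1 / real (Suc j)" using p by (simp add: frac_le)
          finally show ?thesis .
        qed
        then have rM: "rs M < e / 2" using j by (simp add: inverse_eq_divide)
        show "\<exists>M. \<forall>m\<ge>M. \<forall>n\<ge>M. norm (fs m x - fs n x) < e"
        proof (intro exI allI impI)
          fix m n assume "m \<ge> M" "n \<ge> M"
          then have "\<bar>fs m x - fs M x\<bar> < rs M" "\<bar>fs n x - fs M x\<bar> < rs M" using close xM by auto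
          then show "norm (fs m x - fs n x) < e" using rM by simp
        qed
      qed
      then show ?thesis unfolding L_def by (simp add: Cauchy_convergent_iff convergent_LIMSEQ_iff)
    qed
    have Lclose: "\<bar>L x - fs n x\<bar> \<le> rs n" if "x \<in> Fs n" for x n
    proof -
      have xS: "x \<in> S" using that unfolding S_def by auto
      have "(\<lambda>k. \<bar>fs k x - fs n x\<bar>) \<longlonglongrightarrow> \<bar>L x - fs n x\<bar>"
        by (intro tendsto_intros conv[OF xS])
      moreover have "eventually (\<lambda>k. rs n \<ge> \<bar>fs k x - fs n x\<bar>) sequentially"
        unfolding eventually_sequentially using close that by (intro exI[of _ n]) (auto intro: less_imp_le)
      ultimately show ?thesis by (rule tendsto_upperbound) simp
    qed
    obtain h where h: "h \<in> ?Y" "\<forall>x\<in>S. h x = L x"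
      using extend[OF assms(1) assms(3) ST Sc] by blast
    have hB: "h \<in> Bset X (fs n) (Fs n) (2 * rs n)" for n
    proof -
      have "\<bar>h x - fs n x\<bar> < 2 * rs n" if "x \<in> Fs n" for x
        using Lclose[OF that] h(2) that rs0[of n] unfolding S_def by auto
      then show ?thesis using h(1) unfolding Bset_def by auto
    qed
    have "h \<in> W" using hB[of 0] F0(4) unfolding fs_def Fs_def rs_def st0 by auto
    moreover have "h \<in> U n" for n using hB[of "Suc n"] Bsub[of n] by blast
    moreover have "h \<in> topspace (B1 X)" using h(1) topspace_B1 by blast
    ultimately show "(topspace (B1 X) \<inter> (\<Inter>n. U n)) \<inter> W \<noteq> {}" by blast
  qed
qed

end
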